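(* Let $G=(V,E)$ be a connected finite graph and let $0<\beta<1$. Then every complex zero $\lambda$ of the polynomial $\mathcal{D}Z_I(G,\beta,\lambda)=\lambda\frac{\partial}{\partial\lambda}Z_I(G,\beta,\lambda)$ (viewed as a polynomial in $\lambda$) satisfies $|\lambda|<1$. In particular $Z_I(G,\beta,\lambda)$ and $\mathcal{D}Z_I(G,\beta,\lambda)$ have no common zero, i.e. $Z_I(G,\beta,\cdot)$ has only simple zeros.
   Context: For a finite undirected graph $G=(V,E)$, $0<\beta\le 1$ and $\lambda\in\mathbb{C}$, the ferromagnetic Ising partition function is $Z_I(G,\beta,\lambda)=\sum_{\sigma\in\{+,-\}^V}\beta^{d(\sigma)}\lambda^{p(\sigma)}$, where $d(\sigma)$ is the number of edges $\{u,v\}\in E$ with $\sigma(u)\neq\sigma(v)$ and $p(\sigma)$ is the number of vertices $v$ with $\sigma(v)=+$. It is a polynomial in $\lambda$ of degree $|V|$. *)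

theory Defs
  imports Complex_Main "HOL-Computational_Algebra.Polynomial" "HOL-Library.FuncSet"
begin

definition finite_graph :: "'a set \<Rightarrow> 'a set set \<Rightarrow> bool" where
  "finite_graph V E \<longleftrightarrow> finite V \<and>
     (\<forall>e\<in>E. \<exists>u v. e = {u, v} \<and> u \<noteq> v \<and> u \<in> V \<and> v \<in> V)"

definition adj :: "'a set set \<Rightarrow> 'a \<Rightarrow> 'a \<Rightarrow> bool" where
  "adj E u v \<longleftrightarrow> {u, v} \<in> E"

definition connected_graph :: "'a set \<Rightarrow> 'a set set \<Rightarrow> bool" where
  "connected_graph V E \<longleftrightarrow> V \<noteq> {} \<and> (\<forall>u\<in>V. \<forall>v\<in>V. (adj E)\<^sup>*\<^sup>* u v)"

text \<open>Spin configurations sigma : V -> {+,-}, with True = + (extensional outside V).\<close>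
definition configs :: "'a set \<Rightarrow> ('a \<Rightarrow> bool) set" where
  "configs V = V \<rightarrow>\<^sub>E (UNIV :: bool set)"

definition disagree :: "'a set set \<Rightarrow> ('a \<Rightarrow> bool) \<Rightarrow> nat" where
  "disagree E \<sigma> = card {e \<in> E. \<exists>u v. e = {u, v} \<and> \<sigma> u \<noteq> \<sigma> v}"

definition plus_count :: "'a set \<Rightarrow> ('a \<Rightarrow> bool) \<Rightarrow> nat" where
  "plus_count V \<sigma> = card {v \<in> V. \<sigma> v}"

definition Z_I :: "'a set \<Rightarrow> 'a set set \<Rightarrow> real \<Rightarrow> complex poly" where
  "Z_I V E \<beta> = (\<Sum>\<sigma>\<in>configs V. monom (complex_of_real \<beta> ^ disagree E \<sigma>) (plus_count V \<sigma>))"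

definition DZ_I :: "'a set \<Rightarrow> 'a set set \<Rightarrow> real \<Rightarrow> complex poly" where
  "DZ_I V E \<beta> = [:0, 1:] * pderiv (Z_I V E \<beta>)"

end

theory Submission
  imports Defs "HOL-Computational_Algebra.Fundamental_Theorem_Algebra"
begin

lemma cmod_sq: "(cmod z)^2 = (Re z)^2 + (Im z)^2"
  by (simp add: cmod_power2)

lemma mob_ineq:
  fixes x :: complex and \<beta> :: real
  shows "(cmod (1 + \<beta>*x))^2 - (cmod (\<beta> + x))^2 = (1 - \<beta>^2) * (1 - (cmod x)^2)"
  unfolding cmod_sq by (simp add: power2_eq_square algebra_simps)

lemma edge_nz:
  fixes x y :: complex and \<beta> :: real
  assumes "0 < \<beta>" "\<beta> < 1" "cmod x < 1" "cmod y < 1"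
  shows "1 + \<beta>*x + \<beta>*y + x*y \<noteq> 0"
proof
  assume h: "1 + \<beta>*x + \<beta>*y + x*y = 0"
  have eq: "1 + \<beta>*x = - y * (\<beta> + x)" using h by (simp add: algebra_simps eq_neg_iff_add_eq_0)
  have "(cmod (1 + \<beta>*x))^2 - (cmod (\<beta> + x))^2 > 0"
  proof -
    have "(1 - \<beta>^2) > 0" using assms by (simp add: power2_eq_square) (smt (verit) mult_le_cancel_left1)
    moreover have "(cmod x)^2 < 1" using assms(3)
      by (simp add: abs_square_less_1)
    then have "1 - (cmod x)^2 > 0" by simp
    ultimately show ?thesis by (simp add: mob_ineq del: of_real_add)
  qed
  moreover have "cmod (1 + \<beta>*x) \<le> cmod (\<beta> + x)"
  proof -
    have "cmod (1 + \<beta>*x) = cmod y * cmod (\<beta> + x)" using eq by (simp add: norm_mult)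
    also have "\<dots> \<le> cmod (\<beta> + x)" using assms(4) by (simp add: mult_left_le_one_le)
    finally show ?thesis .
  qed
  ultimately show False
    by (smt (verit) norm_ge_zero power_mono)
qed

lemma asano:
  fixes a b c d z :: complex
  assumes H: "\<And>x x'. cmod x < 1 \<Longrightarrow> cmod x' < 1 \<Longrightarrow> a + b*x + c*x' + d*x*x' \<noteq> 0"
    and z: "cmod z < 1"
  shows "a + d*z \<noteq> 0"
proof
  assume az: "a + d*z = 0"
  show False
  proof (cases "d = 0")
    case True
    then have "a = 0" using az by simp
    then show False using H[of 0 0] by simp
  next
    case False
    define s where "s = csqrt ((b+c)^2 - 4*a*d)"
    have s2: "s^2 = (b+c)^2 - 4*a*d" unfolding s_def by simp
    define t1 where "t1 = (-(b+c) + s)/(2*d)"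
    define t2 where "t2 = (-(b+c) - s)/(2*d)"
    have r1: "a + (b+c)*t1 + d*t1^2 = 0"
      unfolding t1_def using False s2
      by (simp add: field_simps power2_eq_square) algebra
    have r2: "a + (b+c)*t2 + d*t2^2 = 0"
      unfolding t2_def using False s2
      by (simp add: field_simps power2_eq_square) algebra
    have prod: "t1 * t2 = a / d"
      unfolding t1_def t2_def using False s2
      by (simp add: field_simps power2_eq_square) algebra
    have "a / d = - z" using az False by (simp add: field_simps) (metis add.commute add_eq_0_iff mult.commute)
    then have "cmod t1 * cmod t2 < 1" using prod z by (metis norm_minus_cancel norm_mult)
    then have "cmod t1 < 1 \<or> cmod t2 < 1"
      by (smt (verit) mult_le_cancel_left1 norm_ge_zero)
    then show False
    proof
      assume "cmod t1 < 1" then show False using H[of t1 t1] r1 by (simp add: algebra_simps power2_eq_square)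
    next
      assume "cmod t2 < 1" then show False using H[of t2 t2] r2 by (simp add: algebra_simps power2_eq_square)
    qed
  qed
qed

lemma edge_open:
  fixes A B C D x0 y0 :: complex and \<beta> :: real
  assumes b: "0 < \<beta>" "\<beta> < 1"
    and P: "\<And>x y. cmod x < 1 \<Longrightarrow> cmod y < 1 \<Longrightarrow> A + B*x + C*y + D*x*y \<noteq> 0"
    and x0: "cmod x0 < 1" and y0: "cmod y0 < 1"
  shows "A + \<beta>*B*x0 + \<beta>*C*y0 + D*x0*y0 \<noteq> 0"
proof -
  have S1: "(A + \<beta>*B*x0) + (C + \<beta>*D*x0)*y + (\<beta>*A + B*x0)*y' + (\<beta>*C + D*x0)*y*y' \<noteq> 0"
    if y: "cmod y < 1" and y': "cmod y' < 1" for y y'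
  proof -
    have "(A+C*y)*(1+\<beta>*y') + ((B+D*y)*(\<beta>+y'))*x0 \<noteq> 0"
    proof (rule asano[OF _ x0])
      fix x x' :: complex assume x: "cmod x < 1" and x': "cmod x' < 1"
      have "(A+C*y)*(1+\<beta>*y') + ((B+D*y)*(1+\<beta>*y'))*x + ((A+C*y)*(\<beta>+y'))*x' + ((B+D*y)*(\<beta>+y'))*x*x'
          = (A + B*x + C*y + D*x*y) * (1 + \<beta>*x' + \<beta>*y' + x'*y')"
        by (simp add: algebra_simps)
      moreover have "A + B*x + C*y + D*x*y \<noteq> 0" using P x y by blast
      moreover have "1 + \<beta>*x' + \<beta>*y' + x'*y' \<noteq> 0" using edge_nz[OF b x' y'] .
      ultimately show "(A+C*y)*(1+\<beta>*y') + ((B+D*y)*(1+\<beta>*y'))*x + ((A+C*y)*(\<beta>+y'))*x' + ((B+D*y)*(\<beta>+y'))*x*x' \<noteq> 0"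
        by simp
    qed
    moreover have "(A+C*y)*(1+\<beta>*y') + ((B+D*y)*(\<beta>+y'))*x0 =
      (A + \<beta>*B*x0) + (C + \<beta>*D*x0)*y + (\<beta>*A + B*x0)*y' + (\<beta>*C + D*x0)*y*y'"
      by (simp add: algebra_simps)
    ultimately show ?thesis by simp
  qed
  have "(A + \<beta>*B*x0) + (\<beta>*C + D*x0)*y0 \<noteq> 0"
    by (rule asano[OF _ y0]) (use S1 in blast)
  then show ?thesis by (simp add: algebra_simps)
qed

lemma edge_strict:
  fixes A B C D x0 y1 :: complex and \<beta> :: real
  assumes b: "0 < \<beta>" "\<beta> < 1"
    and P: "\<And>x y. cmod x < 1 \<Longrightarrow> cmod y < 1 \<Longrightarrow> A + B*x + C*y + D*x*y \<noteq> 0"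
    and x0: "cmod x0 < 1" and y1: "cmod y1 \<le> 1"
  shows "A + \<beta>*B*x0 + \<beta>*C*y1 + D*x0*y1 \<noteq> 0"
proof (cases "cmod y1 < 1")
  case True
  then show ?thesis using edge_open[OF b P x0] by blast
next
  case False
  then have y1n: "cmod y1 = 1" using y1 by simp
  have Qo: "\<And>x y. cmod x < 1 \<Longrightarrow> cmod y < 1 \<Longrightarrow> A + \<beta>*B*x + \<beta>*C*y + D*x*y \<noteq> 0"
    using edge_open[OF b P] by blast
  show ?thesis
  proof
    assume Z: "A + \<beta>*B*x0 + \<beta>*C*y1 + D*x0*y1 = 0"
    define c where "c = \<beta>*B + D*y1"
    have N1: "A + \<beta>*C*y1 = - x0 * c" using Z unfolding c_def by (simp add: algebra_simps eq_neg_iff_add_eq_0)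
    show False
    proof (cases "c = 0")
      case True
      then have A: "A = - \<beta>*C*y1" using N1 by (simp add: eq_neg_iff_add_eq_0)
      show False
      proof (cases "C = 0")
        case True
        then show False using P[of 0 0] A by simp
      next
        case False
        have "cmod (-A/C) = \<beta>" using A False y1n b by (simp add: norm_mult norm_divide)
        then have "A + B*0 + C*(-A/C) + D*0*(-A/C) \<noteq> 0" using P[of 0 "-A/C"] b by simp
        then show False using False by simp
      qed
    next
      case False
      define g where "g = (1 - cmod x0) * cmod c"
      have g: "g > 0" unfolding g_def using False x0 by simp
      define K where "K = \<beta>*cmod C + cmod D"
      have K: "K \<ge> 0" unfolding K_def using b by simp
      define \<delta> where "\<delta> = min (1/2) (g / (2*K+1))"
      have \<delta>: "0 < \<delta>" "\<delta> < 1" unfolding \<delta>_def using g K by auto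
      have K\<delta>: "K * \<delta> < g"
      proof -
        have "K * \<delta> \<le> K * (g/(2*K+1))" unfolding \<delta>_def using K by (intro mult_left_mono) auto
        also have "\<dots> < g" using g K by (simp add: field_simps) (simp add: add_pos_nonneg)
        finally show ?thesis .
      qed
      define y where "y = complex_of_real (1 - \<delta>) * y1"
      have ydist: "cmod (y - y1) = \<delta>" proof -
        have "y - y1 = - complex_of_real \<delta> * y1" unfolding y_def by (simp add: algebra_simps)
        then show ?thesis using y1n \<delta> by (simp add: norm_mult)
      qed
      have ymod: "cmod y < 1" unfolding y_def using y1n \<delta> by (simp add: norm_mult del: of_real_diff)
      define N where "N = A + \<beta>*C*y"
      define M where "M = \<beta>*B + D*y"
      have "cmod N \<le> cmod (A + \<beta>*C*y1) + \<beta> * cmod C * \<delta>"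
      proof -
        have "N = (A + \<beta>*C*y1) + \<beta>*C*(y - y1)" unfolding N_def by (simp add: algebra_simps)
        then have "cmod N \<le> cmod (A + \<beta>*C*y1) + cmod (\<beta>*C*(y - y1))" by (metis norm_triangle_ineq)
        also have "cmod (\<beta>*C*(y - y1)) = \<beta> * cmod C * \<delta>" using ydist b by (simp add: norm_mult)
        finally show ?thesis .
      qed
      also have "cmod (A + \<beta>*C*y1) = cmod x0 * cmod c" using N1 by (simp add: norm_mult)
      finally have Nb: "cmod N \<le> cmod x0 * cmod c + \<beta> * cmod C * \<delta>" .
      have Mb: "cmod M \<ge> cmod c - cmod D * \<delta>"
      proof -
        have "c = M - D*(y - y1)" unfolding M_def c_def by (simp add: algebra_simps)
        then have "cmod c \<le> cmod M + cmod (D*(y - y1))" by (metis norm_triangle_ineq4)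
        also have "cmod (D*(y - y1)) = cmod D * \<delta>" using ydist by (simp add: norm_mult)
        finally show ?thesis by simp
      qed
      have NM: "cmod N < cmod M"
        using Nb Mb K\<delta> unfolding g_def K_def by (simp add: algebra_simps)
      then have M0: "M \<noteq> 0" by auto
      define x where "x = - N / M"
      have xm: "cmod x < 1" unfolding x_def using NM M0 by (simp add: norm_divide divide_less_eq)
      have "A + \<beta>*B*x + \<beta>*C*y + D*x*y = N + x * M" unfolding N_def M_def by (simp add: algebra_simps)
      also have "\<dots> = 0" unfolding x_def using M0 by simp
      finally show False using Qo[OF xm ymod] by simp
    qed
  qed
qed

lemma align:
  fixes A B C D l :: complex
  assumes l: "cmod l = 1" and Z: "A + B*l + C*l + D*l*l = 0" and c0: "C + D*l \<noteq> 0"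
    and P: "\<And>x y. cmod x < 1 \<Longrightarrow> cmod y < 1 \<Longrightarrow> A + B*x + C*y + D*x*y \<noteq> 0"
  shows "Re ((B + D*l)/(C + D*l)) \<ge> 0"
proof (rule ccontr)
  assume neg: "\<not> Re ((B + D*l)/(C + D*l)) \<ge> 0"
  define bb where "bb = B + D*l"
  define c where "c = C + D*l"
  have c: "c \<noteq> 0" using c0 unfolding c_def .
  define den where "den = (\<lambda>s::real. c - D*l*complex_of_real s)"
  define f where "f = (\<lambda>s::real. 2 * Re (bb / den s) + s * (cmod (bb / den s))^2)"
  have den0: "den 0 = c" unfolding den_def by simp
  have tden: "(den \<longlongrightarrow> den 0) (at_right 0)"
    unfolding den_def by (intro tendsto_intros)
  have ev1: "eventually (\<lambda>s. den s \<noteq> 0) (at_right 0)"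
    using tendsto_imp_eventually_ne[OF tden] den0 c by simp
  have tf: "(f \<longlongrightarrow> f 0) (at_right 0)"
    unfolding f_def using c den0 by (intro tendsto_intros tden) auto
  have f0: "f 0 < 0" unfolding f_def using neg den0 unfolding bb_def c_def by simp
  have ev2: "eventually (\<lambda>s. f s < 0) (at_right 0)"
    using order_tendstoD(2)[OF tf f0] .
  have ev3: "eventually (\<lambda>s::real. s < 1) (at_right 0)"
    using eventually_at_right_field by (metis zero_less_one)
  have "eventually (\<lambda>s. den s \<noteq> 0 \<and> f s < 0 \<and> s < 1) (at_right 0)"
    using ev1 ev2 ev3 by eventually_elim auto
  then obtain b0 where b0: "b0 > 0" and hb: "\<And>s. s > 0 \<Longrightarrow> s < b0 \<Longrightarrow> den s \<noteq> 0 \<and> f s < 0 \<and> s < 1"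
    unfolding eventually_at_right_field by blast
  define s where "s = b0 / 2"
  have s: "s > 0" "s < b0" unfolding s_def using b0 by auto
  have ds: "den s \<noteq> 0" and fs: "f s < 0" and s1: "s < 1" using hb[OF s] by auto
  define q where "q = bb / den s"
  define x where "x = l * complex_of_real (1 - s)"
  define y where "y = l * (1 + complex_of_real s * q)"
  have xm: "cmod x < 1" unfolding x_def using l s s1 by (simp add: norm_mult del: of_real_diff)
  have sq: "(cmod (1 + complex_of_real s * q))^2 = 1 + s * (2 * Re q + s * (cmod q)^2)"
    unfolding cmod_sq by (simp add: power2_eq_square algebra_simps)
  have "1 + s * (2 * Re q + s * (cmod q)^2) < 1"
    using fs s unfolding f_def q_def by (simp add: mult_pos_neg)
  then have "(cmod (1 + complex_of_real s * q))^2 < 1" using sq by simp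
  then have "cmod (1 + complex_of_real s * q) < 1" by (simp add: abs_square_less_1)
  then have ym: "cmod y < 1" unfolding y_def using l by (simp add: norm_mult)
  have expand: "A + B*x + C*y + D*x*y = bb*(x-l) + c*(y-l) + D*(x-l)*(y-l)"
  proof -
    have "(A + B*x + C*y + D*x*y) - (bb*(x-l) + c*(y-l) + D*(x-l)*(y-l)) = A + B*l + C*l + D*l*l"
      unfolding bb_def c_def by (simp add: algebra_simps)
    then show ?thesis using Z by simp
  qed
  have "bb*(x-l) + c*(y-l) + D*(x-l)*(y-l) = l * complex_of_real s * (- bb + q * den s)"
    unfolding x_def y_def den_def by (simp add: algebra_simps)
  also have "q * den s = bb" unfolding q_def using ds by simp
  finally have "A + B*x + C*y + D*x*y = 0" using expand by simp
  then show False using P[OF xm ym] by simp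
qed

definition cutn :: "'a set set \<Rightarrow> 'a set \<Rightarrow> nat" where
  "cutn H S = card {e\<in>H. \<exists>u v. e = {u,v} \<and> (u\<in>S) \<noteq> (v\<in>S)}"

definition Wt :: "'a set set \<Rightarrow> real \<Rightarrow> 'a set \<Rightarrow> complex" where
  "Wt H \<beta> S = complex_of_real (\<beta> ^ cutn H S)"

definition FMw :: "'a set \<Rightarrow> ('a set \<Rightarrow> complex) \<Rightarrow> ('a \<Rightarrow> complex) \<Rightarrow> complex" where
  "FMw V w \<mu> = (\<Sum>S\<in>Pow V. w S * (\<Prod>v\<in>S. \<mu> v))"

lemma sum_Pow_insert:
  assumes "a \<notin> A" "finite A"
  shows "(\<Sum>S\<in>Pow (insert a A). f S) = (\<Sum>S\<in>Pow A. f S + f (insert a S))"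
proof -
  have inj: "inj_on (insert a) (Pow A)" unfolding inj_on_def
  proof (intro ballI impI)
    fix x y assume "x \<in> Pow A" "y \<in> Pow A" "insert a x = insert a y"
    then show "x = y" using assms(1) insert_ident[of a x y] by blast
  qed
  have "(\<Sum>S\<in>Pow (insert a A). f S) = (\<Sum>S\<in>Pow A. f S) + (\<Sum>S\<in>insert a ` Pow A. f S)"
    unfolding Pow_insert using assms by (intro sum.union_disjoint) auto
  also have "(\<Sum>S\<in>insert a ` Pow A. f S) = (\<Sum>S\<in>Pow A. f (insert a S))"
    using sum.reindex[OF inj] by simp
  finally show ?thesis by (simp add: sum.distrib)
qed

definition cA where "cA V u v w \<mu> = (\<Sum>S\<in>Pow (V - {u,v}). w S * prod \<mu> S)"
definition cB where "cB V u v w \<mu> = (\<Sum>S\<in>Pow (V - {u,v}). w (insert u S) * prod \<mu> S)"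
definition cC where "cC V u v w \<mu> = (\<Sum>S\<in>Pow (V - {u,v}). w (insert v S) * prod \<mu> S)"
definition cD where "cD V u v w \<mu> = (\<Sum>S\<in>Pow (V - {u,v}). w (insert u (insert v S)) * prod \<mu> S)"

lemma decomp:
  assumes V: "finite V" "u \<in> V" "v \<in> V" "u \<noteq> v"
  shows "FMw V w (\<mu>(u:=x, v:=y)) = cA V u v w \<mu> + cB V u v w \<mu> * x + cC V u v w \<mu> * y + cD V u v w \<mu> * x * y"
proof -
  define V' where "V' = V - {u,v}"
  have VV: "V = insert u (insert v V')" unfolding V'_def using V by auto
  have fV': "finite V'" unfolding V'_def using V by simp
  have nu: "u \<notin> insert v V'" unfolding V'_def using V by auto
  have nv: "v \<notin> V'" unfolding V'_def by auto
  define \<mu>' where "\<mu>' = \<mu>(u:=x, v:=y)"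
  define g where "g = (\<lambda>S. w S * prod \<mu>' S)"
  have "FMw V w \<mu>' = (\<Sum>S\<in>Pow V'. (g S + g (insert v S)) + (g (insert u S) + g (insert u (insert v S))))"
    unfolding FMw_def VV g_def
    by (simp add: sum_Pow_insert[OF nu] sum_Pow_insert[OF nv fV'] fV' sum.distrib)
  also have "\<dots> = (\<Sum>S\<in>Pow V'. w S * prod \<mu> S + (w (insert u S) * prod \<mu> S) * x
        + (w (insert v S) * prod \<mu> S) * y + (w (insert u (insert v S)) * prod \<mu> S) * x * y)"
  proof (rule sum.cong[OF refl])
    fix S assume S: "S \<in> Pow V'"
    have fS: "finite S" using S fV' finite_subset by auto
    have uS: "u \<notin> S" and vS: "v \<notin> S" using S unfolding V'_def by auto
    have p0: "prod \<mu>' S = prod \<mu> S"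
      unfolding \<mu>'_def using uS vS by (intro prod.cong) auto
    have pu: "prod \<mu>' (insert u S) = x * prod \<mu> S" using p0 fS uS V(4) unfolding \<mu>'_def by simp
    have pv: "prod \<mu>' (insert v S) = y * prod \<mu> S" using p0 fS vS unfolding \<mu>'_def by simp
    have puv: "prod \<mu>' (insert u (insert v S)) = x * (y * prod \<mu> S)" using p0 fS uS vS V(4) unfolding \<mu>'_def by simp
    show "(g S + g (insert v S)) + (g (insert u S) + g (insert u (insert v S))) =
      w S * prod \<mu> S + (w (insert u S) * prod \<mu> S) * x
        + (w (insert v S) * prod \<mu> S) * y + (w (insert u (insert v S)) * prod \<mu> S) * x * y"
      unfolding g_def p0 pu pv puv by (simp add: algebra_simps)
  qed
  also have "\<dots> = cA V u v w \<mu> + cB V u v w \<mu> * x + cC V u v w \<mu> * y + cD V u v w \<mu> * x * y"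
    unfolding cA_def cB_def cC_def cD_def V'_def[symmetric] by (simp add: sum.distrib sum_distrib_right)
  finally show ?thesis unfolding \<mu>'_def .
qed

lemma filter_insert: "{e \<in> insert x H. P e} = (if P x then insert x {e\<in>H. P e} else {e\<in>H. P e})"
  by auto

lemma cutn_insert:
  assumes "finite H" "{u,v} \<notin> H"
  shows "cutn (insert {u,v} H) S = cutn H S + (if (u\<in>S) \<noteq> (v\<in>S) then 1 else 0)"
proof -
  let ?P = "\<lambda>e. \<exists>a b. e = {a,b} \<and> (a\<in>S) \<noteq> (b\<in>S)"
  have Pe: "?P {u,v} \<longleftrightarrow> (u\<in>S) \<noteq> (v\<in>S)"
    by (auto simp: doubleton_eq_iff)
  have "{e\<in>insert {u,v} H. ?P e} = (if ?P {u,v} then insert {u,v} {e\<in>H. ?P e} else {e\<in>H. ?P e})"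
    by (rule filter_insert)
  then show ?thesis unfolding cutn_def using assms Pe by (auto simp del: insert_iff)
qed

abbreviation "goodedges V H \<equiv> (\<forall>e\<in>H. \<exists>u v. e = {u,v} \<and> u\<noteq>v \<and> u\<in>V \<and> v\<in>V)"

lemma edge_coeffs:
  assumes "finite H" "{u,v} \<notin> H" "u \<noteq> v"
  shows "cA V u v (Wt (insert {u,v} H) \<beta>) \<mu> = cA V u v (Wt H \<beta>) \<mu>"
    "cB V u v (Wt (insert {u,v} H) \<beta>) \<mu> = \<beta> * cB V u v (Wt H \<beta>) \<mu>"
    "cC V u v (Wt (insert {u,v} H) \<beta>) \<mu> = \<beta> * cC V u v (Wt H \<beta>) \<mu>"
    "cD V u v (Wt (insert {u,v} H) \<beta>) \<mu> = cD V u v (Wt H \<beta>) \<mu>"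
proof -
  note ci = cutn_insert[OF assms(1,2)]
  show "cA V u v (Wt (insert {u,v} H) \<beta>) \<mu> = cA V u v (Wt H \<beta>) \<mu>"
    unfolding cA_def Wt_def ci by (intro sum.cong) auto
  show "cB V u v (Wt (insert {u,v} H) \<beta>) \<mu> = \<beta> * cB V u v (Wt H \<beta>) \<mu>"
    unfolding cB_def Wt_def ci sum_distrib_left using assms(3) by (intro sum.cong) auto
  show "cC V u v (Wt (insert {u,v} H) \<beta>) \<mu> = \<beta> * cC V u v (Wt H \<beta>) \<mu>"
    unfolding cC_def Wt_def ci sum_distrib_left using assms(3) by (intro sum.cong) auto
  show "cD V u v (Wt (insert {u,v} H) \<beta>) \<mu> = cD V u v (Wt H \<beta>) \<mu>"
    unfolding cD_def Wt_def ci by (intro sum.cong) auto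
qed

lemma reach_split:
  assumes "(adj H)\<^sup>*\<^sup>* z t" "H = insert {u,v} H'"
  shows "(adj H')\<^sup>*\<^sup>* z t \<or> (adj H')\<^sup>*\<^sup>* z u \<or> (adj H')\<^sup>*\<^sup>* z v"
  using assms(1)
proof (induction rule: rtranclp_induct)
  case base then show ?case by simp
next
  case (step y t)
  show ?case
  proof (cases "{y,t} = {u,v}")
    case True
    then have "y = u \<or> y = v" by (auto simp: doubleton_eq_iff)
    then show ?thesis using step.IH by auto
  next
    case False
    then have "adj H' y t" using step.hyps(2) assms(2) unfolding adj_def by auto
    then show ?thesis using step.IH by (meson rtranclp.rtrancl_into_rtrancl)
  qed
qed

lemma FM_empty:
  assumes "finite V"
  shows "FMw V (Wt {} \<beta>) \<mu> = (\<Prod>v\<in>V. \<mu> v + 1)"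
  unfolding FMw_def Wt_def cutn_def using prod_add[OF assms, of \<mu> "\<lambda>_. 1"] by simp

lemma strictLY:
  assumes V: "finite V" and b: "0 < \<beta>" "\<beta> < 1"
  shows "finite H \<Longrightarrow> goodedges V H \<Longrightarrow> (\<forall>w\<in>V. cmod (\<mu> w) \<le> 1) \<Longrightarrow>
    (\<forall>z\<in>V. \<exists>s\<in>V. cmod (\<mu> s) < 1 \<and> (adj H)\<^sup>*\<^sup>* z s) \<Longrightarrow> FMw V (Wt H \<beta>) \<mu> \<noteq> 0"
proof (induction H arbitrary: \<mu> rule: finite_psubset_induct)
  case (psubset H)
  show ?case
  proof (cases "H = {}")
    case True
    have lt: "cmod (\<mu> z) < 1" if zV: "z \<in> V" for z
    proof -
      obtain s where s: "s \<in> V" "cmod (\<mu> s) < 1" "(adj H)\<^sup>*\<^sup>* z s" using bspec[OF psubset.prems(3) zV] by blast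
      have s3: "(adj {})\<^sup>*\<^sup>* z s" using s(3) True by simp
      have "z = s" using s3 by (cases rule: rtranclp.cases) (auto simp: adj_def)
      then show ?thesis using s by simp
    qed
    have nz: "\<mu> z + 1 \<noteq> 0" if "z \<in> V" for z
    proof
      assume "\<mu> z + 1 = 0"
      then have "\<mu> z = -1" by (simp add: eq_neg_iff_add_eq_0)
      then show False using lt[OF that] by simp
    qed
    have "(\<Prod>v\<in>V. \<mu> v + 1) \<noteq> 0" using nz V by (simp add: prod_zero_iff)
    then show ?thesis using True FM_empty[OF V] by simp
  next
    case False
    then obtain e where e: "e \<in> H" by blast
    obtain a b' where ab: "e = {a,b'}" "a \<noteq> b'" "a \<in> V" "b' \<in> V" using bspec[OF psubset.prems(1) e] by blast
    obtain s where s: "s \<in> V" "cmod (\<mu> s) < 1" "(adj H)\<^sup>*\<^sup>* a s" using bspec[OF psubset.prems(3) ab(3)] by blast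
    obtain u v where uv: "{u,v} \<in> H" "u \<noteq> v" "u \<in> V" "v \<in> V" "cmod (\<mu> u) < 1"
    proof (cases "a = s")
      case True
      show ?thesis by (rule that[of a b']) (use ab e s True in auto)
    next
      case False
      then obtain y where y: "adj H y s" using s(3) by (metis rtranclp.cases)
      then have ys: "{s,y} \<in> H" unfolding adj_def by (simp add: insert_commute)
      obtain p q where pq: "{s,y} = {p,q}" "p \<noteq> q" "p \<in> V" "q \<in> V" using bspec[OF psubset.prems(1) ys] by blast
      then have "y \<in> V" "s \<noteq> y" by (auto simp: doubleton_eq_iff)
      then show ?thesis by (intro that[of s y]) (use ys s in auto)
    qed
    define H' where "H' = H - {{u,v}}"
    have HH: "H = insert {u,v} H'" unfolding H'_def using uv by auto
    have nH: "{u,v} \<notin> H'" unfolding H'_def by simp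
    have sub: "H' \<subset> H" unfolding H'_def using uv by auto
    have fH': "finite H'" using psubset.hyps sub finite_subset by auto
    have geH': "goodedges V H'" using psubset.prems(1) sub by auto
    let ?A = "cA V u v (Wt H' \<beta>) \<mu>" and ?B = "cB V u v (Wt H' \<beta>) \<mu>"
      and ?C = "cC V u v (Wt H' \<beta>) \<mu>" and ?D = "cD V u v (Wt H' \<beta>) \<mu>"
    have P: "?A + ?B*x + ?C*y + ?D*x*y \<noteq> 0" if x: "cmod x < 1" and y: "cmod y < 1" for x y
    proof -
      have "FMw V (Wt H' \<beta>) (\<mu>(u:=x, v:=y)) \<noteq> 0"
      proof (rule psubset.IH[OF sub geH'])
        show "\<forall>w\<in>V. cmod ((\<mu>(u := x, v := y)) w) \<le> 1" using psubset.prems(2) x y by auto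
        show "\<forall>z\<in>V. \<exists>s\<in>V. cmod ((\<mu>(u := x, v := y)) s) < 1 \<and> (adj H')\<^sup>*\<^sup>* z s"
        proof
          fix z assume z: "z \<in> V"
          obtain t where t: "t \<in> V" "cmod (\<mu> t) < 1" "(adj H)\<^sup>*\<^sup>* z t" using psubset.prems(3) z by blast
          have mu: "cmod ((\<mu>(u := x, v := y)) u) < 1" using x uv(2) by simp
          have mv: "cmod ((\<mu>(u := x, v := y)) v) < 1" using y by simp
          have "(adj H')\<^sup>*\<^sup>* z t \<or> (adj H')\<^sup>*\<^sup>* z u \<or> (adj H')\<^sup>*\<^sup>* z v"
            using reach_split[OF t(3) HH] .
          then consider (a1) "(adj H')\<^sup>*\<^sup>* z t" | (a2) "(adj H')\<^sup>*\<^sup>* z u" | (a3) "(adj H')\<^sup>*\<^sup>* z v"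
            by blast
          then show "\<exists>s\<in>V. cmod ((\<mu>(u := x, v := y)) s) < 1 \<and> (adj H')\<^sup>*\<^sup>* z s"
          proof cases
            case a1
            show ?thesis
            proof (cases "t = u \<or> t = v")
              case True
              then show ?thesis
              proof
                assume "t = u" then show ?thesis using a1 mu uv(3) by (intro bexI[of _ u]) auto
              next
                assume "t = v" then show ?thesis using a1 mv uv(4) by (intro bexI[of _ v]) auto
              qed
            next
              case False
              then have "cmod ((\<mu>(u := x, v := y)) t) < 1" using t(2) by simp
              then show ?thesis using a1 t(1) by (intro bexI[of _ t]) auto
            qed
          next
            case a2 then show ?thesis using mu uv(3) by (intro bexI[of _ u]) auto
          next
            case a3 then show ?thesis using mv uv(4) by (intro bexI[of _ v]) auto
          qed
        qed
      qed
      then show ?thesis using decomp[OF V uv(3,4,2)] by simp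
    qed
    have "?A + \<beta>*?B*(\<mu> u) + \<beta>*?C*(\<mu> v) + ?D*(\<mu> u)*(\<mu> v) \<noteq> 0"
      by (rule edge_strict[OF b P uv(5)]) (use psubset.prems(2) uv in auto)
    moreover have "FMw V (Wt H \<beta>) \<mu> = ?A + \<beta>*?B*(\<mu> u) + \<beta>*?C*(\<mu> v) + ?D*(\<mu> u)*(\<mu> v)"
    proof -
      have "FMw V (Wt H \<beta>) \<mu> = FMw V (Wt H \<beta>) (\<mu>(u:=\<mu> u, v:=\<mu> v))" by simp
      also have "\<dots> = cA V u v (Wt H \<beta>) \<mu> + cB V u v (Wt H \<beta>) \<mu> * \<mu> u + cC V u v (Wt H \<beta>) \<mu> * \<mu> v + cD V u v (Wt H \<beta>) \<mu> * \<mu> u * \<mu> v"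
        by (rule decomp[OF V uv(3,4,2)])
      also have "\<dots> = ?A + \<beta>*?B*(\<mu> u) + \<beta>*?C*(\<mu> v) + ?D*(\<mu> u)*(\<mu> v)"
        unfolding HH edge_coeffs[OF fH' nH uv(2)] by simp
      finally show ?thesis .
    qed
    ultimately show ?thesis by simp
  qed
qed

lemma prod_const_pow: "finite S \<Longrightarrow> (\<Prod>v\<in>S. (x::complex)) = x ^ card S"
  by simp

lemma FM_const: "FMw V w (\<lambda>_. x) = (\<Sum>S\<in>Pow V. w S * x ^ card S)"
  unfolding FMw_def by simp

lemma edges_in_V:
  assumes "finite_graph V E" "e \<in> E" "e = {u,v}"
  shows "u \<in> V" "v \<in> V"
proof -
  have "\<forall>e\<in>E. \<exists>u v. e = {u, v} \<and> u \<noteq> v \<and> u \<in> V \<and> v \<in> V" using assms(1) unfolding finite_graph_def by (rule conjunct2)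
  then obtain a b where "e = {a,b}" "a \<in> V" "b \<in> V" using assms(2) by meson
  then show "u \<in> V" "v \<in> V" using assms(3) by (auto simp: doubleton_eq_iff)
qed

lemma goodedges_of:
  assumes "finite_graph V E" shows "goodedges V E"
  using assms unfolding finite_graph_def by (rule conjunct2)

lemma finite_E:
  assumes "finite_graph V E" shows "finite E"
proof -
  have "E \<subseteq> Pow V"
  proof
    fix e assume "e \<in> E"
    then obtain u v where "e = {u,v}" "u \<in> V" "v \<in> V" using goodedges_of[OF assms] by meson
    then show "e \<in> Pow V" by auto
  qed
  moreover have "finite V" using assms unfolding finite_graph_def by (rule conjunct1)
  ultimately show ?thesis by (meson finite_Pow_iff finite_subset)
qed

lemma disagree_cutn:
  assumes "finite_graph V E"
  shows "disagree E \<sigma> = cutn E {v\<in>V. \<sigma> v}"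
proof -
  have "{e\<in>E. \<exists>u v. e = {u,v} \<and> \<sigma> u \<noteq> \<sigma> v} = {e\<in>E. \<exists>u v. e = {u,v} \<and> (u \<in> {v\<in>V. \<sigma> v}) \<noteq> (v \<in> {v\<in>V. \<sigma> v})}"
  proof (intro Collect_cong conj_cong refl)
    fix e assume e: "e \<in> E"
    show "(\<exists>u v. e = {u,v} \<and> \<sigma> u \<noteq> \<sigma> v) = (\<exists>u v. e = {u,v} \<and> (u \<in> {v\<in>V. \<sigma> v}) \<noteq> (v \<in> {v\<in>V. \<sigma> v}))"
      using edges_in_V[OF assms e] by blast
  qed
  then show ?thesis unfolding disagree_def cutn_def by simp
qed

lemma bij_configs: "bij_betw (\<lambda>\<sigma>. {v\<in>V. \<sigma> v}) (configs V) (Pow V)"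
proof (rule bij_betw_byWitness[where f' = "\<lambda>S. restrict (\<lambda>v. v \<in> S) V"])
  show "\<forall>a\<in>configs V. restrict (\<lambda>v. v \<in> {v \<in> V. a v}) V = a"
    unfolding configs_def by (auto simp: PiE_def extensional_def restrict_def fun_eq_iff)
  show "\<forall>a'\<in>Pow V. {v \<in> V. restrict (\<lambda>v. v \<in> a') V v} = a'" by auto
  show "(\<lambda>\<sigma>. {v \<in> V. \<sigma> v}) ` configs V \<subseteq> Pow V" by auto
  show "(\<lambda>S. restrict (\<lambda>v. v \<in> S) V) ` Pow V \<subseteq> configs V" unfolding configs_def by auto
qed

lemma Z_eq:
  assumes "finite_graph V E"
  shows "Z_I V E \<beta> = (\<Sum>S\<in>Pow V. monom (Wt E \<beta> S) (card S))"
proof -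
  have "Z_I V E \<beta> = (\<Sum>\<sigma>\<in>configs V. (\<lambda>S. monom (Wt E \<beta> S) (card S)) {v\<in>V. \<sigma> v})"
    unfolding Z_I_def Wt_def plus_count_def
    by (intro sum.cong refl) (simp add: disagree_cutn[OF assms] of_real_power)
  also have "\<dots> = (\<Sum>S\<in>Pow V. monom (Wt E \<beta> S) (card S))"
    by (rule sum.reindex_bij_betw[OF bij_configs])
  finally show ?thesis .
qed

lemma poly_Z:
  assumes "finite_graph V E"
  shows "poly (Z_I V E \<beta>) x = FMw V (Wt E \<beta>) (\<lambda>_. x)"
  unfolding Z_eq[OF assms] FM_const by (simp add: poly_sum poly_monom)

lemma pderiv_sum': "pderiv (sum f A) = (\<Sum>x\<in>A. pderiv (f x))"
  using higher_pderiv_sum[of 1 f A] by simp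

lemma poly_pderiv_Z:
  assumes "finite_graph V E"
  shows "poly (pderiv (Z_I V E \<beta>)) x = (\<Sum>S\<in>Pow V. of_nat (card S) * Wt E \<beta> S * x ^ (card S - 1))"
  unfolding Z_eq[OF assms] by (simp add: pderiv_sum' poly_sum pderiv_monom poly_monom)

lemma LYc:
  assumes G: "finite_graph V E" "connected_graph V E" and b: "0 < \<beta>" "\<beta> < 1"
    and bd: "\<forall>v\<in>V. cmod (\<mu> v) \<le> 1" and s: "s \<in> V" "cmod (\<mu> s) < 1"
  shows "FMw V (Wt E \<beta>) \<mu> \<noteq> 0"
proof -
  have fV: "finite V" using G(1) unfolding finite_graph_def by (rule conjunct1)
  have "\<forall>z\<in>V. \<exists>s\<in>V. cmod (\<mu> s) < 1 \<and> (adj E)\<^sup>*\<^sup>* z s"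
  proof
    fix z assume "z \<in> V"
    then have "(adj E)\<^sup>*\<^sup>* z s" using G(2) s(1) unfolding connected_graph_def by (meson conjunct2)
    then show "\<exists>s\<in>V. cmod (\<mu> s) < 1 \<and> (adj E)\<^sup>*\<^sup>* z s" using s by (intro bexI[of _ s]) auto
  qed
  then show ?thesis using strictLY[OF fV b finite_E[OF G(1)] goodedges_of[OF G(1)] bd] by blast
qed

lemma N1:
  assumes G: "finite_graph V E" "connected_graph V E" and b: "0 < \<beta>" "\<beta> < 1" and x: "cmod x < 1"
  shows "poly (Z_I V E \<beta>) x \<noteq> 0"
proof -
  obtain s where s: "s \<in> V" using G(2) unfolding connected_graph_def by blast
  show ?thesis unfolding poly_Z[OF G(1)] by (rule LYc[OF G b _ s]) (use x in auto)
qed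

lemma cutn_compl:
  assumes G: "finite_graph V E" and S: "S \<subseteq> V"
  shows "cutn E (V - S) = cutn E S"
proof -
  have "{e\<in>E. \<exists>u v. e = {u,v} \<and> (u\<in>V - S) \<noteq> (v\<in>V - S)} = {e\<in>E. \<exists>u v. e = {u,v} \<and> (u\<in>S) \<noteq> (v\<in>S)}"
  proof (intro Collect_cong conj_cong refl)
    fix e assume e: "e \<in> E"
    show "(\<exists>u v. e = {u,v} \<and> (u\<in>V - S) \<noteq> (v\<in>V - S)) = (\<exists>u v. e = {u,v} \<and> (u\<in>S) \<noteq> (v\<in>S))"
      using edges_in_V[OF G e] by blast
  qed
  then show ?thesis unfolding cutn_def by simp
qed

lemma FM_sym:
  assumes G: "finite_graph V E" and x: "x \<noteq> 0"
  shows "FMw V (Wt E \<beta>) (\<lambda>_. x) = x ^ card V * FMw V (Wt E \<beta>) (\<lambda>_. 1/x)"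
proof -
  have fV: "finite V" using G unfolding finite_graph_def by (rule conjunct1)
  have "FMw V (Wt E \<beta>) (\<lambda>_. x) = (\<Sum>S\<in>Pow V. Wt E \<beta> (V - S) * x ^ card (V - S))"
    unfolding FM_const
    by (rule sum.reindex_bij_witness[where i="\<lambda>S. V - S" and j="\<lambda>S. V - S"]) (auto simp: double_diff)
  also have "\<dots> = (\<Sum>S\<in>Pow V. x ^ card V * (Wt E \<beta> S * (1/x) ^ card S))"
  proof (intro sum.cong refl)
    fix S assume S: "S \<in> Pow V"
    then have SV: "S \<subseteq> V" by simp
    have c: "card (V - S) = card V - card S" using SV fV by (simp add: card_Diff_subset finite_subset)
    have le: "card S \<le> card V" using SV fV by (simp add: card_mono)
    have "x ^ card (V - S) = x ^ card V / x ^ card S" unfolding c using x le by (simp add: power_diff)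
    then show "Wt E \<beta> (V - S) * x ^ card (V - S) = x ^ card V * (Wt E \<beta> S * (1/x) ^ card S)"
      unfolding Wt_def cutn_compl[OF G SV] by (simp add: power_one_over field_simps)
  qed
  also have "\<dots> = x ^ card V * FMw V (Wt E \<beta>) (\<lambda>_. 1/x)"
    unfolding FM_const by (simp add: sum_distrib_left)
  finally show ?thesis .
qed

lemma N2:
  assumes G: "finite_graph V E" "connected_graph V E" and b: "0 < \<beta>" "\<beta> < 1" and x: "cmod x > 1"
  shows "poly (Z_I V E \<beta>) x \<noteq> 0"
proof -
  have x0: "x \<noteq> 0" using x by auto
  have "cmod (1/x) < 1" using x by (simp add: norm_divide divide_less_eq)
  then have "poly (Z_I V E \<beta>) (1/x) \<noteq> 0" using N1[OF G b] by blast
  then show ?thesis unfolding poly_Z[OF G(1)] FM_sym[OF G(1) x0] using x0 by simp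
qed

lemma roots_circle:
  assumes G: "finite_graph V E" "connected_graph V E" and b: "0 < \<beta>" "\<beta> < 1"
    and "poly (Z_I V E \<beta>) x = 0"
  shows "cmod x = 1"
  using N1[OF G b] N2[OF G b] assms(5) by (meson linorder_neqE_linordered_idom)

lemma coeff_top:
  assumes G: "finite_graph V E"
  shows "coeff (Z_I V E \<beta>) (card V) = 1"
proof -
  have fV: "finite V" using G unfolding finite_graph_def by (rule conjunct1)
  have "coeff (Z_I V E \<beta>) (card V) = (\<Sum>S\<in>Pow V. if card S = card V then Wt E \<beta> S else 0)"
    unfolding Z_eq[OF G] by (simp add: coeff_sum coeff_monom)
  also have "\<dots> = (\<Sum>S\<in>Pow V. if S = V then Wt E \<beta> S else 0)"
  proof (intro sum.cong refl)
    fix S assume "S \<in> Pow V"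
    then have "S \<subseteq> V" by simp
    then have "card S = card V \<longleftrightarrow> S = V" using fV by (meson card_subset_eq)
    then show "(if card S = card V then Wt E \<beta> S else 0) = (if S = V then Wt E \<beta> S else 0)" by simp
  qed
  also have "\<dots> = Wt E \<beta> V" by (simp add: fV)
  also have "cutn E V = 0"
  proof -
    have "{e\<in>E. \<exists>u v. e = {u,v} \<and> (u\<in>V) \<noteq> (v\<in>V)} = {}"
      using edges_in_V[OF G] by blast
    then show ?thesis unfolding cutn_def by (metis (no_types, lifting) card.empty)
  qed
  then have "Wt E \<beta> V = 1" unfolding Wt_def by simp
  finally show ?thesis .
qed

lemma degree_pos:
  assumes G: "finite_graph V E" "connected_graph V E"
  shows "degree (Z_I V E \<beta>) \<ge> 1"
proof -
  have fV: "finite V" using G(1) unfolding finite_graph_def by (rule conjunct1)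
  have "V \<noteq> {}" using G(2) unfolding connected_graph_def by (rule conjunct1)
  then have "card V \<ge> 1" using fV by (simp add: Suc_le_eq card_gt_0_iff)
  moreover have "card V \<le> degree (Z_I V E \<beta>)" using coeff_top[OF G(1)] by (simp add: le_degree)
  ultimately show ?thesis by simp
qed

definition sa where "sa V w l v = (\<Sum>S\<in>{S\<in>Pow V. v \<notin> S}. w S * l ^ card S)"
definition sb where "sb V w l v = (\<Sum>S\<in>{S\<in>Pow V. v \<in> S}. w S * l ^ (card S - 1))"

lemma sv:
  assumes fV: "finite V" and v: "v \<in> V"
  shows "FMw V w ((\<lambda>_. l)(v:=x)) = sa V w l v + sb V w l v * x"
proof -
  have split: "Pow V = {S\<in>Pow V. v \<in> S} \<union> {S\<in>Pow V. v \<notin> S}" by auto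
  have "FMw V w ((\<lambda>_. l)(v:=x)) = (\<Sum>S\<in>{S\<in>Pow V. v \<in> S}. w S * prod ((\<lambda>_. l)(v:=x)) S) +
      (\<Sum>S\<in>{S\<in>Pow V. v \<notin> S}. w S * prod ((\<lambda>_. l)(v:=x)) S)"
    unfolding FMw_def by (subst split, rule sum.union_disjoint) (use fV in auto)
  also have "(\<Sum>S\<in>{S\<in>Pow V. v \<in> S}. w S * prod ((\<lambda>_. l)(v:=x)) S) = sb V w l v * x"
    unfolding sb_def sum_distrib_right
  proof (intro sum.cong refl)
    fix S assume S: "S \<in> {S\<in>Pow V. v \<in> S}"
    then have fS: "finite S" and vS: "v \<in> S" using fV finite_subset by auto
    have "prod ((\<lambda>_. l)(v:=x)) S = x * prod ((\<lambda>_. l)(v:=x)) (S - {v})"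
      using fS vS by (simp add: prod.remove)
    also have "prod ((\<lambda>_. l)(v:=x)) (S - {v}) = l ^ (card S - 1)"
      using fS vS by (simp add: card_Diff_singleton)
    finally show "w S * prod ((\<lambda>_. l)(v:=x)) S = w S * l ^ (card S - 1) * x" by simp
  qed
  also have "(\<Sum>S\<in>{S\<in>Pow V. v \<notin> S}. w S * prod ((\<lambda>_. l)(v:=x)) S) = sa V w l v"
    unfolding sa_def
  proof (intro sum.cong refl)
    fix S assume S: "S \<in> {S\<in>Pow V. v \<notin> S}"
    then have fS: "finite S" and vS: "v \<notin> S" using fV finite_subset by auto
    have "prod ((\<lambda>_. l)(v:=x)) S = prod (\<lambda>_. l) S" using vS by (intro prod.cong) auto
    then show "w S * prod ((\<lambda>_. l)(v:=x)) S = w S * l ^ card S" using fS by simp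
  qed
  finally show ?thesis by (simp only: add.commute)
qed

lemma deriv_sum:
  assumes G: "finite_graph V E"
  shows "poly (pderiv (Z_I V E \<beta>)) l = (\<Sum>v\<in>V. sb V (Wt E \<beta>) l v)"
proof -
  have fV: "finite V" using G unfolding finite_graph_def by (rule conjunct1)
  have "poly (pderiv (Z_I V E \<beta>)) l = (\<Sum>S\<in>Pow V. \<Sum>v\<in>{v. v \<in> V \<and> v \<in> S}. Wt E \<beta> S * l ^ (card S - 1))"
    unfolding poly_pderiv_Z[OF G]
  proof (intro sum.cong refl)
    fix S assume "S \<in> Pow V"
    then have "{v. v \<in> V \<and> v \<in> S} = S" by auto
    then show "of_nat (card S) * Wt E \<beta> S * l ^ (card S - 1) = (\<Sum>v\<in>{v. v \<in> V \<and> v \<in> S}. Wt E \<beta> S * l ^ (card S - 1))"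
      by simp
  qed
  also have "\<dots> = (\<Sum>v\<in>V. \<Sum>S\<in>{S. S \<in> Pow V \<and> v \<in> S}. Wt E \<beta> S * l ^ (card S - 1))"
    by (rule sum.swap_restrict) (use fV in auto)
  also have "\<dots> = (\<Sum>v\<in>V. sb V (Wt E \<beta>) l v)" unfolding sb_def by simp
  finally show ?thesis .
qed

lemma simple_root:
  assumes G: "finite_graph V E" "connected_graph V E" and b: "0 < \<beta>" "\<beta> < 1"
    and l: "cmod l = 1" and Zl: "poly (Z_I V E \<beta>) l = 0"
  shows "poly (pderiv (Z_I V E \<beta>)) l \<noteq> 0"
proof -
  have fV: "finite V" using G(1) unfolding finite_graph_def by (rule conjunct1)
  obtain v0 where v0: "v0 \<in> V" using G(2) unfolding connected_graph_def by blast
  define \<mu> where "\<mu> = (\<lambda>_::'a. l)"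
  define w where "w = Wt E \<beta>"
  have F0: "FMw V w \<mu> = 0" using Zl unfolding poly_Z[OF G(1)] \<mu>_def w_def .
  let ?b = "\<lambda>v. sb V w l v"
  have bv0: "?b v0 \<noteq> 0"
  proof
    assume h: "?b v0 = 0"
    have "FMw V w (\<mu>(v0:=0)) \<noteq> 0" unfolding w_def
      by (rule LYc[OF G b _ v0]) (auto simp: \<mu>_def l)
    moreover have "FMw V w (\<mu>(v0:=0)) = sa V w l v0" using sv[OF fV v0] h unfolding \<mu>_def by simp
    moreover have "FMw V w (\<mu>(v0:=l)) = sa V w l v0" using sv[OF fV v0, of w l l] h unfolding \<mu>_def by simp
    moreover have "\<mu>(v0:=l) = \<mu>" unfolding \<mu>_def by auto
    ultimately show False using F0 by simp
  qed
  have re: "Re (?b u / ?b v0) \<ge> 0" if u: "u \<in> V" "u \<noteq> v0" for u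
  proof -
    let ?A = "cA V u v0 w \<mu>" and ?B = "cB V u v0 w \<mu>" and ?C = "cC V u v0 w \<mu>" and ?D = "cD V u v0 w \<mu>"
    have dec: "FMw V w (\<mu>(u:=x, v0:=y)) = ?A + ?B*x + ?C*y + ?D*x*y" for x y
      by (rule decomp[OF fV u(1) v0 u(2)])
    have e1: "sa V w l u + ?b u * x = ?A + ?B*x + ?C*l + ?D*x*l" for x
    proof -
      have "\<mu>(u:=x, v0:=l) = (\<lambda>_. l)(u:=x)" unfolding \<mu>_def using u(2) by auto
      then show ?thesis using dec[of x l] sv[OF fV u(1), of w l x] by simp
    qed
    have bu: "?b u = ?B + ?D*l" using e1[of 0] e1[of 1] by (simp add: algebra_simps)
    have e2: "sa V w l v0 + ?b v0 * y = ?A + ?B*l + ?C*y + ?D*l*y" for y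
    proof -
      have "\<mu>(u:=l, v0:=y) = (\<lambda>_. l)(v0:=y)" unfolding \<mu>_def using u(2) by auto
      then show ?thesis using dec[of l y] sv[OF fV v0, of w l y] by simp
    qed
    have bv: "?b v0 = ?C + ?D*l" using e2[of 0] e2[of 1] by (simp add: algebra_simps)
    have Z: "?A + ?B*l + ?C*l + ?D*l*l = 0"
    proof -
      have "\<mu>(u:=l, v0:=l) = \<mu>" unfolding \<mu>_def by auto
      then show ?thesis using dec[of l l] F0 by simp
    qed
    have P: "?A + ?B*x + ?C*y + ?D*x*y \<noteq> 0" if "cmod x < 1" "cmod y < 1" for x y
    proof -
      have "FMw V w (\<mu>(u:=x, v0:=y)) \<noteq> 0" unfolding w_def
        by (rule LYc[OF G b _ u(1)]) (use that l u(2) in \<open>auto simp: \<mu>_def\<close>)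
      then show ?thesis using dec by simp
    qed
    have "Re ((?B + ?D*l)/(?C + ?D*l)) \<ge> 0"
      by (rule align[OF l Z _ P]) (use bv bv0 in simp)
    then show ?thesis using bu bv by simp
  qed
  have "poly (pderiv (Z_I V E \<beta>)) l = (\<Sum>v\<in>V. ?b v)" unfolding deriv_sum[OF G(1)] w_def ..
  also have "\<dots> = ?b v0 * (\<Sum>v\<in>V. ?b v / ?b v0)" using bv0 by (simp add: sum_distrib_left)
  finally have eq: "poly (pderiv (Z_I V E \<beta>)) l = ?b v0 * (\<Sum>v\<in>V. ?b v / ?b v0)" .
  have r1: "Re (\<Sum>v\<in>V. ?b v / ?b v0) = Re (?b v0 / ?b v0) + (\<Sum>v\<in>V - {v0}. Re (?b v / ?b v0))"
    using fV v0 by (simp add: sum.remove Re_sum)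
  have r2: "Re (?b v0 / ?b v0) = 1" using bv0 by simp
  have r3: "(\<Sum>v\<in>V - {v0}. Re (?b v / ?b v0)) \<ge> 0" using re by (intro sum_nonneg) auto
  have "Re (\<Sum>v\<in>V. ?b v / ?b v0) \<ge> 1" using r1 r2 r3 by linarith
  then have "(\<Sum>v\<in>V. ?b v / ?b v0) \<noteq> 0" by (metis zero_complex.simps(1) not_one_le_zero)
  then show ?thesis using eq bv0 by simp
qed

lemma re_half:
  fixes a l :: complex
  assumes "cmod a \<le> cmod l" "a \<noteq> l"
  shows "Re (l / (l - a)) \<ge> 1/2"
proof -
  define d where "d = (Re (l - a))^2 + (Im (l - a))^2"
  define N where "N = Re l * Re (l - a) + Im l * Im (l - a)"
  have dd: "d = (cmod (l - a))^2" unfolding d_def cmod_sq ..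
  have d: "d > 0" unfolding dd using assms(2) by simp
  have sq: "(cmod a)^2 \<le> (cmod l)^2" using assms(1) by (simp add: power_mono)
  have "2 * N - d = (cmod l)^2 - (cmod a)^2"
    unfolding cmod_sq N_def d_def by (simp add: power2_eq_square algebra_simps)
  then have "d \<le> 2 * N" using sq by linarith
  then have "1/2 \<le> N / d" using d by (simp add: le_divide_eq)
  moreover have "Re (l / (l - a)) = N / d" unfolding N_def d_def by (simp add: Re_divide cmod_sq)
  ultimately show ?thesis by simp
qed

lemma gauss_lucas:
  fixes p :: "complex poly"
  assumes deg: "degree p \<ge> 1" and roots: "\<And>a. poly p a = 0 \<Longrightarrow> cmod a \<le> 1"
    and l: "cmod l \<ge> 1" and pl: "poly p l \<noteq> 0"
  shows "poly (pderiv p) l \<noteq> 0"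
proof -
  obtain root where R: "smult (lead_coeff p) (\<Prod>i<degree p. [:-root i, 1:]) = p"
    using complex_poly_decompose' by blast
  define n where "n = degree p"
  define A where "A = {..<n}"
  define c where "c = lead_coeff p"
  have fA: "finite A" unfolding A_def by simp
  have pe: "poly p x = c * (\<Prod>i\<in>A. x - root i)" for x
    by (subst R[symmetric]) (simp add: A_def n_def c_def poly_prod)
  have c0: "c \<noteq> 0" using pl pe[of l] by auto
  have f0: "l - root i \<noteq> 0" if "i \<in> A" for i
    using pl pe[of l] fA that by (auto simp: prod_zero_iff)
  have rr: "cmod (root i) \<le> 1" if "i \<in> A" for i
  proof -
    have "poly p (root i) = 0" unfolding pe using fA that by (auto simp: prod_zero_iff intro!: bexI[of _ i])
    then show ?thesis by (rule roots)
  qed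
  have pd: "pderiv p = smult c (\<Sum>i\<in>A. (\<Prod>j\<in>A - {i}. [:-root j, 1:]))"
  proof -
    have "pderiv p = smult c (pderiv (\<Prod>i\<in>A. [:-root i, 1:]))"
      by (subst R[symmetric]) (simp add: A_def n_def c_def pderiv_smult)
    also have "pderiv (\<Prod>i\<in>A. [:-root i, 1:]) = (\<Sum>i\<in>A. (\<Prod>j\<in>A - {i}. [:-root j, 1:]))"
      by (simp add: pderiv_prod pderiv_pCons)
    finally show ?thesis .
  qed
  have "poly (pderiv p) l = c * (\<Sum>i\<in>A. (\<Prod>j\<in>A - {i}. l - root j))"
    unfolding pd by (simp add: poly_sum poly_prod)
  also have "\<dots> = c * (\<Sum>i\<in>A. (\<Prod>j\<in>A. l - root j) / (l - root i))"
    using f0 fA by (intro arg_cong2[where f="(*)"] sum.cong refl) (simp add: prod_diff1)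
  also have "\<dots> = poly p l * (\<Sum>i\<in>A. 1 / (l - root i))"
    unfolding pe by (simp add: sum_distrib_left)
  finally have eq: "poly (pderiv p) l = poly p l * (\<Sum>i\<in>A. 1 / (l - root i))" .
  have l0: "l \<noteq> 0" using l by auto
  have "Re (l * (\<Sum>i\<in>A. 1 / (l - root i))) = (\<Sum>i\<in>A. Re (l / (l - root i)))"
    by (simp add: sum_distrib_left Re_sum)
  also have "\<dots> \<ge> (\<Sum>i\<in>A. 1/2)"
  proof (intro sum_mono re_half)
    fix i assume i: "i \<in> A"
    show "cmod (root i) \<le> cmod l" using rr[OF i] l by simp
    show "root i \<noteq> l" using f0[OF i] by simp
  qed
  finally have "Re (l * (\<Sum>i\<in>A. 1 / (l - root i))) \<ge> card A / 2" by simp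
  moreover have "card A \<ge> 1" unfolding A_def n_def using deg by simp
  ultimately have "Re (l * (\<Sum>i\<in>A. 1 / (l - root i))) > 0" by linarith
  then have "(\<Sum>i\<in>A. 1 / (l - root i)) \<noteq> 0" by (metis mult_zero_right zero_complex.simps(1) less_irrefl)
  then show ?thesis using eq pl by simp
qed

theorem theorem1:
  fixes V :: "'a set" and E :: "'a set set" and \<beta> :: real
  assumes "finite_graph V E" and "connected_graph V E"
    and "0 < \<beta>" and "\<beta> < 1"
  shows "(\<forall>z::complex. poly (DZ_I V E \<beta>) z = 0 \<longrightarrow> cmod z < 1)
       \<and> (\<forall>z::complex. \<not> (poly (Z_I V E \<beta>) z = 0 \<and> poly (DZ_I V E \<beta>) z = 0))
       \<and> rsquarefree (Z_I V E \<beta>)"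
proof -
  note G = assms(1,2) and b = assms(3,4)
  have pD: "poly (DZ_I V E \<beta>) z = z * poly (pderiv (Z_I V E \<beta>)) z" for z
    unfolding DZ_I_def by simp
  have P1: "cmod z < 1" if "poly (DZ_I V E \<beta>) z = 0" for z
  proof (rule ccontr)
    assume "\<not> cmod z < 1"
    then have z1: "cmod z \<ge> 1" by simp
    then have z0: "z \<noteq> 0" by auto
    have "poly (pderiv (Z_I V E \<beta>)) z \<noteq> 0"
    proof (cases "poly (Z_I V E \<beta>) z = 0")
      case True
      then have "cmod z = 1" by (rule roots_circle[OF G b])
      then show ?thesis using simple_root[OF G b _ True] by blast
    next
      case False
      show ?thesis
      proof (rule gauss_lucas[OF degree_pos[OF G] _ z1 False])
        fix a assume "poly (Z_I V E \<beta>) a = 0"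
        then show "cmod a \<le> 1" using roots_circle[OF G b] by simp
      qed
    qed
    then show False using that pD z0 by simp
  qed
  have P2: "\<not> (poly (Z_I V E \<beta>) z = 0 \<and> poly (DZ_I V E \<beta>) z = 0)" for z
    using P1 N1[OF G b] by blast
  have P3: "rsquarefree (Z_I V E \<beta>)"
    unfolding rsquarefree_roots using P2 pD by fastforce
  show ?thesis using P1 P2 P3 by blast
qed

end
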